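(* Let $\Sigma=\{0,1,2,3\}$ and $L=\{0^k1^l2^m3^n\mid k,l,m,n\in\mathbb N_0,\ (l\ge2\text{ and }m\ge3)\text{ or }(l\ge3\text{ and }m\ge2)\}$. Then no DACA with time complexity $3$ (i.e., accepting every word of $L$ at some step $t<3$... more precisely, every $x\in L$ of length $n$ at some step $t< T(n)$ with $T\equiv3$) accepts $L$, whereas there is a one-sided $7/8$-error PACA with time complexity $3$ that accepts $L$.
   Context: A (bounded, one-dimensional) CA has state set $Q$, boundary symbol $\$\notin Q$, local transition function $\delta\colon Q_\$\times Q\times Q_\$\to Q$; on $s\in Q^n$, $\Delta(s)=\delta(\$,s_0,s_1)\cdots\delta(s_{n-2},s_{n-1},\$)$. A DACA has input alphabet $\Sigma\subseteq Q$ and accepting states $A\subseteq Q$; it accepts $x\in\Sigma^n$ iff $\Delta^t(x)\in A^n$ for some $t$; it has time complexity $T$ if every accepted $x$ of length $n$ satisfies $\Delta^t(x)\in A^n$ for some $t<T(n)$. A PACA is like a DACA but with two local transition functions $\delta_0,\delta_1$: at each step each cell independently tosses a fair coin $c$ and updates by $\delta_c$; a computation is accepting if at some step all cells are in $A$; time complexity $T$ means every accepting computation on an input of length $n$ first reaches $A^n$ at a step $<T(n)$. For $p\in[0,1)$, a one-sided $p$-error PACA for $L$ accepts every $x\in L$ with probability $\ge1-p$ and every $x\notin L$ with probability $0$. *)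

theory Defs
  imports "HOL-Probability.Probability"
begin

text \<open>States are natural numbers drawn from a finite
  set Q; the boundary symbol is represented by None (so Q with boundary is
  Some ` Q together with None). Configurations are lists.\<close>

type_synonym ltf = "nat option \<Rightarrow> nat \<Rightarrow> nat option \<Rightarrow> nat"

definition left_nb :: "nat list \<Rightarrow> nat \<Rightarrow> nat option" where
  "left_nb s i = (if i = 0 then None else Some (s ! (i - 1)))"

definition right_nb :: "nat list \<Rightarrow> nat \<Rightarrow> nat option" where
  "right_nb s i = (if Suc i < length s then Some (s ! Suc i) else None)"

definition ca_step :: "ltf \<Rightarrow> nat list \<Rightarrow> nat list" where
  "ca_step \<delta> s = map (\<lambda>i. \<delta> (left_nb s i) (s ! i) (right_nb s i)) [0..<length s]"

definition pca_step :: "ltf \<Rightarrow> ltf \<Rightarrow> (nat \<Rightarrow> bool) \<Rightarrow> nat list \<Rightarrow> nat list" where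
  "pca_step \<delta>0 \<delta>1 c s =
     map (\<lambda>i. (if c i then \<delta>1 else \<delta>0) (left_nb s i) (s ! i) (right_nb s i)) [0..<length s]"

definition closed_ltf :: "nat set \<Rightarrow> ltf \<Rightarrow> bool" where
  "closed_ltf Q \<delta> \<longleftrightarrow> (\<forall>a\<in>insert None (Some ` Q). \<forall>b\<in>Q. \<forall>c\<in>insert None (Some ` Q). \<delta> a b c \<in> Q)"

definition Sigma13 :: "nat set" where
  "Sigma13 = {0, 1, 2, 3}"

definition input_word :: "nat list \<Rightarrow> bool" where
  "input_word x \<longleftrightarrow> x \<noteq> [] \<and> set x \<subseteq> Sigma13"

definition Lang13 :: "nat list set" where
  "Lang13 = {replicate k 0 @ replicate l 1 @ replicate m 2 @ replicate n 3 | k l m n.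
               (l \<ge> 2 \<and> m \<ge> 3) \<or> (l \<ge> 3 \<and> m \<ge> 2)}"

definition is_DACA :: "nat set \<Rightarrow> ltf \<Rightarrow> nat set \<Rightarrow> bool" where
  "is_DACA Q \<delta> A \<longleftrightarrow> finite Q \<and> Sigma13 \<subseteq> Q \<and> A \<subseteq> Q \<and> closed_ltf Q \<delta>"

definition daca_accepts :: "ltf \<Rightarrow> nat set \<Rightarrow> nat list \<Rightarrow> bool" where
  "daca_accepts \<delta> A x \<longleftrightarrow> (\<exists>t. set ((ca_step \<delta> ^^ t) x) \<subseteq> A)"

definition daca_time :: "ltf \<Rightarrow> nat set \<Rightarrow> (nat \<Rightarrow> nat) \<Rightarrow> bool" where
  "daca_time \<delta> A T \<longleftrightarrow> (\<forall>x. input_word x \<and> daca_accepts \<delta> A x \<longrightarrow>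
      (\<exists>t < T (length x). set ((ca_step \<delta> ^^ t) x) \<subseteq> A))"

definition daca_lang_is :: "ltf \<Rightarrow> nat set \<Rightarrow> nat list set \<Rightarrow> bool" where
  "daca_lang_is \<delta> A L \<longleftrightarrow> (\<forall>x. input_word x \<longrightarrow> (daca_accepts \<delta> A x \<longleftrightarrow> x \<in> L))"

definition is_PACA :: "nat set \<Rightarrow> ltf \<Rightarrow> ltf \<Rightarrow> nat set \<Rightarrow> bool" where
  "is_PACA Q \<delta>0 \<delta>1 A \<longleftrightarrow> finite Q \<and> Sigma13 \<subseteq> Q \<and> A \<subseteq> Q \<and> closed_ltf Q \<delta>0 \<and> closed_ltf Q \<delta>1"

primrec paca_run :: "ltf \<Rightarrow> ltf \<Rightarrow> (nat \<Rightarrow> nat \<Rightarrow> bool) \<Rightarrow> nat list \<Rightarrow> nat \<Rightarrow> nat list" where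
  "paca_run \<delta>0 \<delta>1 c x 0 = x"
| "paca_run \<delta>0 \<delta>1 c x (Suc t) = pca_step \<delta>0 \<delta>1 (c t) (paca_run \<delta>0 \<delta>1 c x t)"

definition paca_time :: "ltf \<Rightarrow> ltf \<Rightarrow> nat set \<Rightarrow> (nat \<Rightarrow> nat) \<Rightarrow> bool" where
  "paca_time \<delta>0 \<delta>1 A T \<longleftrightarrow> (\<forall>x c. input_word x \<and> (\<exists>t. set (paca_run \<delta>0 \<delta>1 c x t) \<subseteq> A) \<longrightarrow>
      (\<exists>t < T (length x). set (paca_run \<delta>0 \<delta>1 c x t) \<subseteq> A))"

definition pstep :: "ltf \<Rightarrow> ltf \<Rightarrow> nat list \<Rightarrow> nat list pmf" where
  "pstep \<delta>0 \<delta>1 s = map_pmf (\<lambda>c. pca_step \<delta>0 \<delta>1 c s)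
      (Pi_pmf {..<length s} False (\<lambda>_. bernoulli_pmf (1/2)))"

primrec prun :: "ltf \<Rightarrow> ltf \<Rightarrow> nat set \<Rightarrow> nat list \<Rightarrow> nat \<Rightarrow> (nat list \<times> bool) pmf" where
  "prun \<delta>0 \<delta>1 A x 0 = return_pmf (x, set x \<subseteq> A)"
| "prun \<delta>0 \<delta>1 A x (Suc t) = bind_pmf (prun \<delta>0 \<delta>1 A x t)
      (\<lambda>(s, b). map_pmf (\<lambda>s'. (s', b \<or> set s' \<subseteq> A)) (pstep \<delta>0 \<delta>1 s))"

text \<open>Acceptance probability = probability that some step is in A^n
  (the limit of the increasing probabilities of acceptance within t steps).\<close>
definition paca_acc_prob :: "ltf \<Rightarrow> ltf \<Rightarrow> nat set \<Rightarrow> nat list \<Rightarrow> real" where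
  "paca_acc_prob \<delta>0 \<delta>1 A x = (SUP t. measure_pmf.prob (prun \<delta>0 \<delta>1 A x t) {p. snd p})"

definition one_sided_error :: "ltf \<Rightarrow> ltf \<Rightarrow> nat set \<Rightarrow> real \<Rightarrow> nat list set \<Rightarrow> bool" where
  "one_sided_error \<delta>0 \<delta>1 A p L \<longleftrightarrow>
     (\<forall>x. input_word x \<and> x \<in> L \<longrightarrow> paca_acc_prob \<delta>0 \<delta>1 A x \<ge> 1 - p) \<and>
     (\<forall>x. input_word x \<and> x \<notin> L \<longrightarrow> paca_acc_prob \<delta>0 \<delta>1 A x = 0)"

end

theory Submission
  imports Defs
begin


lemma xnot: "[1,1,2,2::nat] \<notin> Lang13"
proof
  assume "[1,1,2,2::nat] \<in> Lang13"
  then obtain k l m n where e: "[1,1,2,2::nat] = replicate k 0 @ replicate l 1 @ replicate m 2 @ replicate n 3"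
    and c: "(l \<ge> 2 \<and> m \<ge> 3) \<or> (l \<ge> 3 \<and> m \<ge> 2)" unfolding Lang13_def by blast
  have "length (filter (\<lambda>v. v=1) [1,1,2,2::nat]) = l" by (subst e) simp
  moreover have "length (filter (\<lambda>v. v=2) [1,1,2,2::nat]) = m" by (subst e) simp
  ultimately show False using c by simp
qed

lemma zin: "[1,1,2,2,2::nat] \<in> Lang13"
  unfolding Lang13_def
  apply (rule CollectI, rule exI[of _ 0], rule exI[of _ 2], rule exI[of _ 3], rule exI[of _ 0])
  by (simp add: numeral_eq_Suc)
lemma yin: "[1,1,1,2,2::nat] \<in> Lang13"
  unfolding Lang13_def
  apply (rule CollectI, rule exI[of _ 0], rule exI[of _ 3], rule exI[of _ 2], rule exI[of _ 0])
  by (simp add: numeral_eq_Suc)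

lemma cs4: "ca_step d [a,b,c,e] = [d None a (Some b), d (Some a) b (Some c), d (Some b) c (Some e), d (Some c) e None]"
  by (simp add: ca_step_def left_nb_def right_nb_def upt_rec)
lemma cs5: "ca_step d [a,b,c,e,f] = [d None a (Some b), d (Some a) b (Some c), d (Some b) c (Some e), d (Some c) e (Some f), d (Some e) f None]"
  by (simp add: ca_step_def left_nb_def right_nb_def upt_rec)

lemma part1: "\<not> (\<exists>Q \<delta> A. is_DACA Q \<delta> A \<and> daca_time \<delta> A (\<lambda>_. 3) \<and> daca_lang_is \<delta> A Lang13)"
proof
  assume "\<exists>Q \<delta> A. is_DACA Q \<delta> A \<and> daca_time \<delta> A (\<lambda>_. 3) \<and> daca_lang_is \<delta> A Lang13"
  then obtain Q d A where T: "daca_time d A (\<lambda>_. 3)" and L: "daca_lang_is d A Lang13" by blast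
  have iw: "input_word [1,1,2,2]" "input_word [1,1,2,2,2]" "input_word [1,1,1,2,2]"
    by (auto simp: input_word_def Sigma13_def)
  have "daca_accepts d A [1,1,2,2,2]" using L iw zin unfolding daca_lang_is_def by blast
  then obtain tz where tz: "tz < 3" "set ((ca_step d ^^ tz) [1,1,2,2,2]) \<subseteq> A"
    using T iw unfolding daca_time_def by fastforce
  have "daca_accepts d A [1,1,1,2,2]" using L iw yin unfolding daca_lang_is_def by blast
  then obtain ty where ty: "ty < 3" "set ((ca_step d ^^ ty) [1,1,1,2,2]) \<subseteq> A"
    using T iw unfolding daca_time_def by fastforce
  have "\<exists>t. set ((ca_step d ^^ t) [1,1,2,2]) \<subseteq> A"
  proof -
    have "tz = 0 \<or> tz = 1 \<or> tz = 2" "ty = 0 \<or> ty = 1 \<or> ty = 2" using tz ty by auto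
    then consider "tz = 0" | "tz = 1" | "ty = 0" | "ty = 1" | "tz = 2 \<and> ty = 2" by blast
    then show ?thesis
    proof cases
      case 1 then show ?thesis using tz by (intro exI[of _ 0]) auto
    next
      case 2 then show ?thesis using tz by (intro exI[of _ 1]) (simp add: cs4 cs5)
    next
      case 3 then show ?thesis using ty by (intro exI[of _ 0]) auto
    next
      case 4 then show ?thesis using ty by (intro exI[of _ 1]) (simp add: cs4 cs5)
    next
      case 5 then show ?thesis using tz ty by (intro exI[of _ 2]) (simp add: cs4 cs5 numeral_2_eq_2)
    qed
  qed
  then have "daca_accepts d A [1,1,2,2]" unfolding daca_accepts_def .
  then have "[1,1,2,2] \<in> Lang13" using L iw unfolding daca_lang_is_def by blast
  then show False using xnot by simp
qed


definition oe :: "nat option \<Rightarrow> nat" where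
  "oe ov = (case ov of None \<Rightarrow> 0 | Some v \<Rightarrow> Suc v)"
definition enc :: "nat \<Rightarrow> nat \<Rightarrow> nat \<Rightarrow> bool \<Rightarrow> nat" where
  "enc a b c g = 1000 + 100*a + 10*b + 2*c + (if g then 1 else 0)"
definition dA :: "nat \<Rightarrow> nat" where "dA s = (s div 100) mod 10"
definition dB :: "nat \<Rightarrow> nat" where "dB s = (s div 10) mod 10"
definition dC :: "nat \<Rightarrow> nat" where "dC s = (s mod 10) div 2"
definition dG :: "nat \<Rightarrow> bool" where "dG s = odd s"

lemma dec_enc: assumes "a \<le> 4" "b \<le> 3" "c \<le> 4"
  shows "dA (enc a b c g) = a" "dB (enc a b c g) = b" "dC (enc a b c g) = c" "dG (enc a b c g) = g"
proof -
  define r where "r = 2*c + (if g then 1 else 0)"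
  have r: "r < 10" "r div 2 = c" "odd r = g" using assms(3) unfolding r_def by auto
  have e: "enc a b c g = r + (b + (10 + a) * 10) * 10" unfolding enc_def r_def by simp
  have e2: "enc a b c g = (r + 10*b) + (10 + a) * 100" unfolding enc_def r_def by simp
  have "(r + 10*b) < 100" using r assms by simp
  then have "enc a b c g div 100 = 10 + a" unfolding e2 by (subst div_mult_self1) auto
  then show "dA (enc a b c g) = a" unfolding dA_def using assms by simp
  have "enc a b c g div 10 = b + (10 + a) * 10" unfolding e using r by (subst div_mult_self1) auto
  then show "dB (enc a b c g) = b" unfolding dB_def using assms by (simp only: mod_mult_self1) simp
  have m: "enc a b c g mod 10 = r" unfolding e using r by (simp only: mod_mult_self1) simp
  show "dC (enc a b c g) = c" unfolding dC_def m using r by simp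
  show "dG (enc a b c g) = g" unfolding dG_def e using r by simp
qed

definition LOC :: "nat \<Rightarrow> nat \<Rightarrow> nat \<Rightarrow> nat \<Rightarrow> nat \<Rightarrow> bool \<Rightarrow> bool \<Rightarrow> bool" where
  "LOC a2 a cc d d2 g gl \<longleftrightarrow>
    (cc = 1 \<and> a \<le> 1 \<and> (d = 1 \<or> d = 2)) \<or>
    (cc = 2 \<and> a \<le> 2 \<and> (d = 2 \<or> d = 3) \<and> (d = 3 \<longrightarrow> a = 2 \<and> d2 = 3 \<and> (g \<longrightarrow> a2 = 2))) \<or>
    (cc = 3 \<and> (a = 2 \<or> a = 3) \<and> (d = 0 \<or> d = 3 \<or> d = 4) \<and> (a = 2 \<longrightarrow> a2 = 2 \<and> d = 3 \<and> (\<not> gl \<longrightarrow> d2 = 3))) \<or>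
    (cc = 4 \<and> (a = 3 \<or> a = 4) \<and> (d = 0 \<or> d = 4))"

definition decide :: "nat option \<Rightarrow> nat \<Rightarrow> nat option \<Rightarrow> bool" where
  "decide l b r = LOC (case l of None \<Rightarrow> 0 | Some s \<Rightarrow> dA s) (dA b) (Suc (dB b)) (dC b)
      (case r of None \<Rightarrow> 0 | Some s \<Rightarrow> dC s) (dG b) (case l of None \<Rightarrow> False | Some s \<Rightarrow> dG s)"

definition valid :: "nat option \<Rightarrow> bool" where
  "valid ov \<longleftrightarrow> (case ov of None \<Rightarrow> True | Some v \<Rightarrow> v \<le> 3)"

definition dg :: "bool \<Rightarrow> ltf" where
  "dg g l b r = (if b \<le> 3 then (if valid l \<and> valid r then enc (oe l) b (oe r) g else 101)
     else if 1000 \<le> b \<and> b < 1500 then (if decide l b r then 100 else 101) else 101)"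

definition Q13 :: "nat set" where "Q13 = {0,1,2,3,100,101} \<union> {1000..<1500}"

lemma valid_oe: "valid ov \<Longrightarrow> oe ov \<le> 4"
  by (auto simp: valid_def oe_def split: option.splits)

lemma dg_Q: "dg g l b r \<in> Q13"
proof -
  have "valid l \<Longrightarrow> valid r \<Longrightarrow> b \<le> 3 \<Longrightarrow> enc (oe l) b (oe r) g \<in> {1000..<1500}"
    using valid_oe[of l] valid_oe[of r] by (auto simp: enc_def)
  then show ?thesis by (auto simp: dg_def Q13_def)
qed

lemma isP: "is_PACA Q13 (dg False) (dg True) {100}"
  unfolding is_PACA_def closed_ltf_def using dg_Q by (simp add: Q13_def Sigma13_def)

lemma dg_if: "(if c then dg True else dg False) = dg c" by simp

lemma pca_nth: "i < length s \<Longrightarrow> pca_step (dg False) (dg True) c s ! i = dg (c i) (left_nb s i) (s ! i) (right_nb s i)"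
  by (simp add: pca_step_def)
lemma pca_len[simp]: "length (pca_step d0 d1 c s) = length s"
  by (simp add: pca_step_def)

lemma run_len[simp]: "length (paca_run d0 d1 c x t) = length x"
  by (induction t) auto

definition xo :: "nat list \<Rightarrow> int \<Rightarrow> nat" where
  "xo x j = (if 0 \<le> j \<and> j < int (length x) then Suc (x ! nat j) else 0)"

definition P :: "nat list \<Rightarrow> (nat \<Rightarrow> bool) \<Rightarrow> nat \<Rightarrow> bool" where
  "P x c i = LOC (xo x (int i - 2)) (xo x (int i - 1)) (xo x (int i)) (xo x (int i + 1)) (xo x (int i + 2))
      (c i) (0 < i \<and> c (i - 1))"

lemma letters: "input_word x \<Longrightarrow> i < length x \<Longrightarrow> x ! i \<le> 3"
  unfolding input_word_def Sigma13_def using nth_mem by fastforce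

lemma step1: assumes "input_word x" "i < length x"
  shows "pca_step (dg False) (dg True) c x ! i = enc (oe (left_nb x i)) (x ! i) (oe (right_nb x i)) (c i)"
proof -
  have "valid (left_nb x i)" "valid (right_nb x i)" "x ! i \<le> 3"
    using letters[OF assms(1)] assms(2) by (auto simp: valid_def left_nb_def right_nb_def)
  then show ?thesis using assms by (simp add: pca_nth dg_def)
qed

lemma oe_le: "input_word x \<Longrightarrow> i < length x \<Longrightarrow> oe (left_nb x i) \<le> 4"
   "input_word x \<Longrightarrow> oe (right_nb x i) \<le> 4"
  using letters[of x] by (auto simp: oe_def left_nb_def right_nb_def)

lemma oeL: "i < length x \<Longrightarrow> oe (left_nb x i) = xo x (int i - 1)"
  by (auto simp: oe_def left_nb_def xo_def nat_diff_distrib)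
lemma oeR: "oe (right_nb x i) = xo x (int i + 1)"
  by (auto simp: oe_def right_nb_def xo_def nat_add_distrib)
lemma oeC: "i < length x \<Longrightarrow> Suc (x ! i) = xo x (int i)"
  by (auto simp: xo_def)

lemma step2: assumes iw: "input_word x" and i: "i < length x"
  shows "pca_step (dg False) (dg True) c1 (pca_step (dg False) (dg True) c0 x) ! i
     = (if P x c0 i then 100 else 101)"
proof -
  let ?s = "pca_step (dg False) (dg True) c0 x"
  have s: "\<And>j. j < length x \<Longrightarrow> ?s ! j = enc (oe (left_nb x j)) (x ! j) (oe (right_nb x j)) (c0 j)"
    using step1[OF iw] by blast
  have L: "\<And>j. j < length x \<Longrightarrow> x ! j \<le> 3" using letters[OF iw] by blast
  have D: "\<And>j. j < length x \<Longrightarrow> dA (?s ! j) = xo x (int j - 1) \<and> dB (?s ! j) = x ! j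
       \<and> dC (?s ! j) = xo x (int j + 1) \<and> dG (?s ! j) = c0 j"
    using s dec_enc oe_le[OF iw] L oeL oeR by simp
  have rng: "1000 \<le> ?s ! i \<and> ?s ! i < 1500"
    using s[OF i] oe_le(1)[OF iw i] oe_le(2)[OF iw, of i] L[OF i] by (auto simp: enc_def)
  have a2: "(case left_nb ?s i of None \<Rightarrow> 0 | Some t \<Rightarrow> dA t) = xo x (int i - 2)"
  proof (cases "i = 0")
    case True then show ?thesis by (simp add: left_nb_def xo_def)
  next
    case False
    then have "int (i - 1) - 1 = int i - 2" by simp
    then show ?thesis using False D[of "i - 1"] i by (simp add: left_nb_def)
  qed
  have gl: "(case left_nb ?s i of None \<Rightarrow> False | Some t \<Rightarrow> dG t) = (0 < i \<and> c0 (i - 1))"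
    using D[of "i - 1"] i by (cases "i = 0") (auto simp: left_nb_def)
  have d2: "(case right_nb ?s i of None \<Rightarrow> 0 | Some t \<Rightarrow> dC t) = xo x (int i + 2)"
  proof (cases "Suc i < length x")
    case False then show ?thesis by (simp add: right_nb_def xo_def)
  next
    case True
    then show ?thesis using D[of "Suc i"] by (simp add: right_nb_def add.commute)
  qed
  have "decide (left_nb ?s i) (?s ! i) (right_nb ?s i) = P x c0 i"
    unfolding decide_def P_def a2 gl d2 using D[OF i] oeC[OF i] by simp
  then show ?thesis using rng i by (simp add: pca_nth dg_def)
qed



abbreviation shp :: "nat \<Rightarrow> nat \<Rightarrow> nat \<Rightarrow> nat \<Rightarrow> nat list" where
  "shp k l m n \<equiv> replicate k 0 @ replicate l 1 @ replicate m 2 @ replicate n 3"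

lemma shp_nth: "i < k+l+m+n \<Longrightarrow> shp k l m n ! i = (if i<k then 0 else if i < k+l then 1 else if i<k+l+m then 2 else 3)"
  by (auto simp: nth_append)

lemma xo_shp: "xo (shp k l m n) j = (if j < 0 then 0 else if j < int k then 1 else if j < int (k+l) then 2
   else if j < int (k+l+m) then 3 else if j < int (k+l+m+n) then 4 else 0)"
proof (cases "0 \<le> j \<and> j < int (k+l+m+n)")
  case True
  then have "nat j < k+l+m+n" by linarith
  then have e: "shp k l m n ! nat j = (if nat j<k then 0 else if nat j < k+l then 1 else if nat j<k+l+m then 2 else 3)"
    by (rule shp_nth)
  show ?thesis using True unfolding xo_def e by auto
next
  case False then show ?thesis unfolding xo_def by auto
qed

lemma C2: assumes c: "(l \<ge> 2 \<and> m \<ge> 3) \<or> (l \<ge> 3 \<and> m \<ge> 2)" and g: "cf (k+l-1) = (3 \<le> l)"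
  and i: "i < length (shp k l m n)"
  shows "P (shp k l m n) cf i"
proof -
  have A: "i = k+l-1 \<Longrightarrow> cf i = (3 \<le> l)" using g by simp
  have B: "i = k+l \<Longrightarrow> (0 < i \<and> cf (i - 1)) = (3 \<le> l)" using g c by auto
  define G where "G = cf i"
  define GL where "GL = (0 < i \<and> cf (i - 1))"
  have A': "i = k+l-1 \<Longrightarrow> G = (3 \<le> l)" using A G_def by simp
  have B': "i = k+l \<Longrightarrow> GL = (3 \<le> l)" using B GL_def by simp
  have "LOC (xo (shp k l m n) (int i - 2)) (xo (shp k l m n) (int i - 1)) (xo (shp k l m n) (int i)) (xo (shp k l m n) (int i + 1)) (xo (shp k l m n) (int i + 2)) G GL"
    using A' B' c i unfolding xo_shp LOC_def by auto
  then show ?thesis unfolding P_def G_def GL_def .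
qed
lemma shape: "sorted x \<Longrightarrow> set x \<subseteq> {0,1,2,3::nat} \<Longrightarrow> \<exists>k l m n. x = shp k l m n"
proof (induction x)
  case Nil
  then show ?case by (intro exI[of _ 0]) simp
next
  case (Cons a xs)
  then obtain k l m n where e: "xs = shp k l m n" by auto
  have ge: "\<forall>y\<in>set xs. a \<le> y" using Cons.prems by simp
  have "a = 0 \<or> a = 1 \<or> a = 2 \<or> a = 3" using Cons.prems by auto
  then show ?case
  proof (elim disjE)
    assume "a = 0" then show ?thesis using e by (intro exI[of _ "Suc k"] exI[of _ l] exI[of _ m] exI[of _ n]) simp
  next
    assume a: "a = 1"
    then have "k = 0" using ge e by (cases k) auto
    then show ?thesis using e a by (intro exI[of _ 0] exI[of _ "Suc l"] exI[of _ m] exI[of _ n]) simp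
  next
    assume a: "a = 2"
    then have "k = 0" "l = 0" using ge e by (cases k; cases l; auto)+
    then show ?thesis using e a by (intro exI[of _ 0] exI[of _ 0] exI[of _ "Suc m"] exI[of _ n]) simp
  next
    assume a: "a = 3"
    then have "k = 0" "l = 0" "m = 0" using ge e by (cases k; cases l; cases m; auto)+
    then show ?thesis using e a by (intro exI[of _ 0] exI[of _ 0] exI[of _ 0] exI[of _ "Suc n"]) simp
  qed
qed

lemma LOC_mono: "LOC a2 a cc d d2 g gl \<Longrightarrow> d = 0 \<or> cc \<le> d"
  unfolding LOC_def by auto

lemma LOC_a0: "LOC a2 0 cc d d2 g gl \<Longrightarrow> cc \<le> 2" unfolding LOC_def by auto
lemma LOC_cc1: "LOC a2 a 1 d d2 g gl \<Longrightarrow> d = 1 \<or> d = 2" unfolding LOC_def by auto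
lemma LOC_cc2: "LOC a2 a 2 d d2 g gl \<Longrightarrow> (d = 2 \<or> d = 3) \<and> (d = 3 \<longrightarrow> a = 2 \<and> d2 = 3 \<and> (g \<longrightarrow> a2 = 2))"
  unfolding LOC_def by auto
lemma LOC_cc3: "LOC a2 2 3 d d2 g gl \<Longrightarrow> \<not> gl \<longrightarrow> d2 = 3" unfolding LOC_def by auto

lemma C1: assumes iw: "input_word x" and all: "\<forall>i<length x. P x cf i"
  shows "x \<in> Lang13"
proof -
  have so: "sorted x" unfolding sorted_iff_nth_Suc
  proof (intro allI impI)
    fix i assume i: "Suc i < length x"
    then have "LOC (xo x (int i - 2)) (xo x (int i - 1)) (xo x (int i)) (xo x (int i + 1)) (xo x (int i + 2))
      (cf i) (0 < i \<and> cf (i - 1))" using all unfolding P_def by auto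
    then have "xo x (int i + 1) = 0 \<or> xo x (int i) \<le> xo x (int i + 1)" by (rule LOC_mono)
    moreover have "xo x (int i + 1) = Suc (x ! Suc i)" "xo x (int i) = Suc (x ! i)"
      using i unfolding xo_def by (auto simp: nat_add_distrib)
    ultimately show "x ! i \<le> x ! Suc i" by simp
  qed
  have st: "set x \<subseteq> {0,1,2,3}" using iw unfolding input_word_def Sigma13_def by simp
  obtain k l m n where e: "x = shp k l m n" using shape[OF so st] by blast
  have len: "length x = k+l+m+n" using e by simp
  have ne: "0 < k + l + m + n" using iw len unfolding input_word_def by (metis length_greater_0_conv)
  let ?x = "shp k l m n"
  have Q: "\<And>i. i < k+l+m+n \<Longrightarrow> LOC (xo ?x (int i - 2)) (xo ?x (int i - 1)) (xo ?x (int i)) (xo ?x (int i + 1)) (xo ?x (int i + 2))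
      (cf i) (0 < i \<and> cf (i - 1))"
  proof -
    fix i assume "i < k+l+m+n"
    then have "P x cf i" using all len by simp
    then show "?thesis i" unfolding P_def e .
  qed
  have "xo ?x (int 0 - 1) = 0" by (simp add: xo_def)
  then have x0: "xo ?x 0 \<le> 2" using LOC_a0 Q[OF ne] by fastforce
  have l1: "l \<ge> 1"
  proof (rule ccontr)
    assume "\<not> l \<ge> 1" then have l0: "l = 0" by simp
    show False
    proof (cases "k = 0")
      case True then show False using x0 l0 ne using xo_shp[of k l m n] by (auto split: if_splits)
    next
      case False
      then have e1: "int (k-1) = int k - 1" "int (k-1) + 1 = int k" by auto
      have "xo ?x (int (k-1)) = 1" using False using xo_shp[of k l m n] by (auto split: if_splits)
      then have "xo ?x (int (k-1) + 1) = 1 \<or> xo ?x (int (k-1) + 1) = 2"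
        using LOC_cc1 Q[of "k-1"] False by fastforce
      then show False using False l0 unfolding e1 using xo_shp[of k l m n] by (auto split: if_splits)
    qed
  qed
  have e2: "int (k+l-1) = int k + int l - 1" "int (k+l-1) + 1 = int k + int l"
     "int (k+l-1) - 1 = int k + int l - 2" "int (k+l-1) - 2 = int k + int l - 3" 
     "int (k+l-1) + 2 = int k + int l + 1" using l1 by auto
  have x2: "xo ?x (int (k+l-1)) = 2" using l1 using xo_shp[of k l m n] by (auto split: if_splits)
  then have qa: "(xo ?x (int (k+l-1) + 1) = 2 \<or> xo ?x (int (k+l-1) + 1) = 3) \<and>
     (xo ?x (int (k+l-1) + 1) = 3 \<longrightarrow> xo ?x (int (k+l-1) - 1) = 2 \<and> xo ?x (int (k+l-1) + 2) = 3 \<and>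
       (cf (k+l-1) \<longrightarrow> xo ?x (int (k+l-1) - 2) = 2))"
    using LOC_cc2 Q[of "k+l-1"] l1 by fastforce
  have m1: "m \<ge> 1"
  proof (rule ccontr)
    assume "\<not> m \<ge> 1" then have m0: "m = 0" by simp
    then show False using qa unfolding e2 using xo_shp[of k l m n] by (auto split: if_splits)
  qed
  have xa: "xo ?x (int k + int l) = 3" using m1 using xo_shp[of k l m n] by (auto split: if_splits)
  then have qa': "xo ?x (int k + int l - 2) = 2 \<and> xo ?x (int k + int l + 1) = 3 \<and>
       (cf (k+l-1) \<longrightarrow> xo ?x (int k + int l - 3) = 2)" using qa unfolding e2 by (simp add: add.commute)
  then have lm: "l \<ge> 2" "m \<ge> 2" "cf (k+l-1) \<Longrightarrow> l \<ge> 3" using xo_shp[of k l m n] by (auto split: if_splits)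
  have "xo ?x (int (k+l) - 1) = 2" using x2 e2(1) by simp
  moreover have "xo ?x (int (k+l)) = 3" using xa by simp
  ultimately have "\<not> (0 < k+l \<and> cf (k+l-1)) \<longrightarrow> xo ?x (int (k+l) + 2) = 3"
    using LOC_cc3 Q[of "k+l"] l1 m1 by fastforce
  then have "\<not> cf (k+l-1) \<Longrightarrow> m \<ge> 3" using l1 using xo_shp[of k l m n] by (auto split: if_splits)
  then have c: "(l \<ge> 2 \<and> m \<ge> 3) \<or> (l \<ge> 3 \<and> m \<ge> 2)" using lm by blast
  show ?thesis unfolding Lang13_def e using c by blast
qed


abbreviation "D0 \<equiv> dg False"
abbreviation "D1 \<equiv> dg True"

lemma run2: assumes "input_word x" "i < length x"
  shows "paca_run D0 D1 c x 2 ! i = (if P x (c 0) i then 100 else 101)"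
  using step2[OF assms] by (simp add: numeral_2_eq_2)

lemma run2_acc: assumes "input_word x"
  shows "set (paca_run D0 D1 c x 2) \<subseteq> {100} \<longleftrightarrow> (\<forall>i<length x. P x (c 0) i)"
proof -
  have "set (paca_run D0 D1 c x 2) \<subseteq> {100} \<longleftrightarrow> (\<forall>i<length x. paca_run D0 D1 c x 2 ! i = 100)"
    by (auto simp: set_conv_nth)
  also have "\<dots> \<longleftrightarrow> (\<forall>i<length x. P x (c 0) i)" using run2[OF assms(1)] by auto
  finally show ?thesis .
qed

lemma run2_rng: assumes "input_word x" shows "set (paca_run D0 D1 c x 2) \<subseteq> {100, 101}"
  using run2[OF assms] by (auto simp: set_conv_nth)

lemma step_dead: assumes "set s \<subseteq> {100, 101}" shows "set (pca_step D0 D1 c s) \<subseteq> {101}"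
proof
  fix v assume "v \<in> set (pca_step D0 D1 c s)"
  then obtain i where i: "i < length s" "v = pca_step D0 D1 c s ! i" by (auto simp: set_conv_nth)
  then have "s ! i \<in> {100, 101}" using assms nth_mem by blast
  then show "v \<in> {101}" using i by (auto simp: pca_nth dg_def)
qed

lemma run_dead: assumes "input_word x" shows "set (paca_run D0 D1 c x (Suc (Suc (Suc t)))) \<subseteq> {101}"
proof (induction t)
  case 0 then show ?case using step_dead run2_rng[OF assms] by (simp add: numeral_2_eq_2)
next
  case (Suc t) then show ?case using step_dead[of "paca_run D0 D1 c x (Suc (Suc (Suc t)))"] by auto
qed

lemma only2: assumes iw: "input_word x" and acc: "set (paca_run D0 D1 c x t) \<subseteq> {100}" shows "t = 2"
proof -
  have ne: "x \<noteq> []" using iw unfolding input_word_def by simp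
  have "t \<noteq> 0"
  proof
    assume "t = 0"
    then have "set x \<subseteq> {100}" using acc by simp
    then show False using ne letters[OF iw, of 0] by (cases x) auto
  qed
  moreover have "t \<noteq> 1"
  proof
    assume "t = 1"
    then have "set (pca_step D0 D1 (c 0) x) \<subseteq> {100}" using acc by simp
    then have "pca_step D0 D1 (c 0) x ! 0 = 100" using ne by (auto simp: set_conv_nth)
    then show False using step1[OF iw, of 0] ne by (simp add: enc_def)
  qed
  moreover have "\<not> t \<ge> 3"
  proof
    assume "t \<ge> 3"
    then have e: "t = Suc (Suc (Suc (t - 3)))" by simp
    have "set (paca_run D0 D1 c x (Suc (Suc (Suc (t - 3))))) \<subseteq> {101}" by (rule run_dead[OF iw])
    then have "set (paca_run D0 D1 c x t) \<subseteq> {101}" using e by metis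
    moreover have "paca_run D0 D1 c x t \<noteq> []" using ne by (metis length_0_conv run_len)
    then have "hd (paca_run D0 D1 c x t) \<in> set (paca_run D0 D1 c x t)" by simp
    ultimately show False using acc by force
  qed
  ultimately show ?thesis by linarith
qed

lemma run_upd: "(\<forall>t'<t. c' t' = c t') \<Longrightarrow> paca_run d0 d1 c' x t = paca_run d0 d1 c x t"
  by (induction t) auto

lemma prun_supp: "(s, b) \<in> set_pmf (prun d0 d1 A x t) \<Longrightarrow>
   \<exists>c. s = paca_run d0 d1 c x t \<and> (b \<longrightarrow> (\<exists>t'\<le>t. set (paca_run d0 d1 c x t') \<subseteq> A))"
proof (induction t arbitrary: s b)
  case 0 then show ?case by auto
next
  case (Suc t)
  from Suc.prems obtain s0 b0 where sb0: "(s0, b0) \<in> set_pmf (prun d0 d1 A x t)"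
    and "(s, b) \<in> set_pmf (map_pmf (\<lambda>s'. (s', b0 \<or> set s' \<subseteq> A)) (pstep d0 d1 s0))"
    by auto
  then obtain c' where s: "s = pca_step d0 d1 c' s0" and b: "b = (b0 \<or> set s \<subseteq> A)"
    unfolding pstep_def by auto
  from Suc.IH[OF sb0] obtain c where c: "s0 = paca_run d0 d1 c x t"
    "b0 \<longrightarrow> (\<exists>t'\<le>t. set (paca_run d0 d1 c x t') \<subseteq> A)" by blast
  define cn where "cn = c(t := c')"
  have r: "\<And>u. u \<le> t \<Longrightarrow> paca_run d0 d1 cn x u = paca_run d0 d1 c x u"
    by (rule run_upd) (auto simp: cn_def)
  have sn: "s = paca_run d0 d1 cn x (Suc t)" using s c r[of t] by (simp add: cn_def)
  show ?case
  proof (rule exI[of _ cn], intro conjI impI)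
    show "s = paca_run d0 d1 cn x (Suc t)" by (fact sn)
    assume "b"
    then show "\<exists>t'\<le>Suc t. set (paca_run d0 d1 cn x t') \<subseteq> A"
      using b c(2) r sn by (metis le_SucI order_refl)
  qed
qed



abbreviation "CC n \<equiv> Pi_pmf {..<n} False (\<lambda>_. bernoulli_pmf (1/2))"

lemma prun2: "map_pmf snd (prun d0 d1 A x 2) =
  bind_pmf (CC (length x)) (\<lambda>c0. map_pmf (\<lambda>c1. set x \<subseteq> A \<or> set (pca_step d0 d1 c0 x) \<subseteq> A
     \<or> set (pca_step d0 d1 c1 (pca_step d0 d1 c0 x)) \<subseteq> A) (CC (length x)))"
  by (simp add: numeral_2_eq_2 bind_return_pmf pstep_def bind_map_pmf map_bind_pmf map_pmf_comp pca_step_def)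

lemma not0: assumes iw: "input_word x" shows "\<not> set x \<subseteq> {100}"
proof
  assume "set x \<subseteq> {100}"
  then have "set (paca_run D0 D1 (\<lambda>_ _. False) x 0) \<subseteq> {100}" by simp
  then show False using only2[OF iw] by fastforce
qed

lemma not1: assumes iw: "input_word x" shows "\<not> set (pca_step D0 D1 c0 x) \<subseteq> {100}"
proof
  assume "set (pca_step D0 D1 c0 x) \<subseteq> {100}"
  then have "set (paca_run D0 D1 (\<lambda>_. c0) x 1) \<subseteq> {100}" by simp
  then show False using only2[OF iw] by fastforce
qed

lemma is2: assumes iw: "input_word x"
  shows "set (pca_step D0 D1 c1 (pca_step D0 D1 c0 x)) \<subseteq> {100} \<longleftrightarrow> (\<forall>i<length x. P x c0 i)"
proof -
  have "paca_run D0 D1 (\<lambda>t. if t = 0 then c0 else c1) x 2 = pca_step D0 D1 c1 (pca_step D0 D1 c0 x)"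
    by (simp add: numeral_2_eq_2)
  then show ?thesis using run2_acc[OF iw, of "\<lambda>t. if t = 0 then c0 else c1"] by simp
qed

lemma prob_half: assumes "i < (n::nat)" shows "measure_pmf.prob (CC n) {c. c i = v} = 1/2"
proof -
  have "measure_pmf.prob (CC n) {c. c i = v} = measure_pmf.prob (map_pmf (\<lambda>c. c i) (CC n)) {v}"
    by (simp add: vimage_def)
  also have "map_pmf (\<lambda>c. c i) (CC n) = bernoulli_pmf (1/2)"
    using assms by (subst Pi_pmf_component) (auto simp del: lessThan_iff)
  finally show ?thesis by (cases v) (simp_all add: measure_pmf_single)
qed

lemma member_prob: assumes iw: "input_word x" and L: "x \<in> Lang13"
  shows "measure_pmf.prob (prun D0 D1 {100} x 2) {p. snd p} \<ge> 1/2"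
proof -
  define G where "G c0 = (\<forall>i<length x. P x c0 i)" for c0
  have "map_pmf snd (prun D0 D1 {100} x 2) = bind_pmf (CC (length x)) (\<lambda>c0. map_pmf (\<lambda>_. G c0) (CC (length x)))"
    unfolding prun2 using not0[OF iw] not1[OF iw] is2[OF iw] G_def by simp
  also have "\<dots> = map_pmf G (CC (length x))" by (simp add: map_pmf_def)
  finally have e: "map_pmf snd (prun D0 D1 {100} x 2) = map_pmf G (CC (length x))" .
  have "measure_pmf.prob (prun D0 D1 {100} x 2) {p. snd p} = measure_pmf.prob (map_pmf snd (prun D0 D1 {100} x 2)) {True}"
    by (simp add: vimage_def)
  also have "\<dots> = measure_pmf.prob (CC (length x)) {c. G c}" unfolding e by (simp add: vimage_def)
  finally have m: "measure_pmf.prob (prun D0 D1 {100} x 2) {p. snd p} = measure_pmf.prob (CC (length x)) {c. G c}" .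
  from L obtain k l m n where x: "x = shp k l m n" and c: "(l \<ge> 2 \<and> m \<ge> 3) \<or> (l \<ge> 3 \<and> m \<ge> 2)"
    unfolding Lang13_def by blast
  have sub: "{c. c (k+l-1) = (3 \<le> l)} \<subseteq> {c. G c}"
    unfolding G_def x using C2[OF c] by blast
  have i: "k + l - 1 < length x" using x c by auto
  have "1/2 = measure_pmf.prob (CC (length x)) {c. c (k+l-1) = (3 \<le> l)}" using prob_half[OF i] by simp
  also have "\<dots> \<le> measure_pmf.prob (CC (length x)) {c. G c}"
    by (rule measure_pmf.finite_measure_mono[OF sub]) simp
  finally show ?thesis using m by simp
qed

lemma nonmember_prob: assumes iw: "input_word x" and L: "x \<notin> Lang13"
  shows "measure_pmf.prob (prun D0 D1 {100} x t) {p. snd p} = 0"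
proof -
  have "set_pmf (prun D0 D1 {100} x t) \<inter> {p. snd p} = {}"
  proof (rule ccontr)
    assume "set_pmf (prun D0 D1 {100} x t) \<inter> {p. snd p} \<noteq> {}"
    then obtain s where "(s, True) \<in> set_pmf (prun D0 D1 {100} x t)" by auto
    then obtain c t' where "set (paca_run D0 D1 c x t') \<subseteq> {100}" using prun_supp by blast
    moreover from this have "t' = 2" using only2[OF iw] by blast
    ultimately have "\<forall>i<length x. P x (c 0) i" using run2_acc[OF iw] by simp
    then have "x \<in> Lang13" using C1[OF iw] by blast
    then show False using L by simp
  qed
  then show ?thesis by (simp add: measure_pmf_zero_iff)
qed

lemma part2: "\<exists>Q \<delta>0 \<delta>1 A. is_PACA Q \<delta>0 \<delta>1 A \<and> paca_time \<delta>0 \<delta>1 A (\<lambda>_. 3) \<and>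
            one_sided_error \<delta>0 \<delta>1 A (7/8) Lang13"
proof (intro exI conjI)
  show "is_PACA Q13 D0 D1 {100}" by (rule isP)
  show "paca_time D0 D1 {100} (\<lambda>_. 3)"
    unfolding paca_time_def
  proof (intro allI impI)
    fix x c assume a: "input_word x \<and> (\<exists>t. set (paca_run D0 D1 c x t) \<subseteq> {100})"
    then obtain t where t: "set (paca_run D0 D1 c x t) \<subseteq> {100}" by blast
    then have "t = 2" using only2 a by blast
    then show "\<exists>t<3. set (paca_run D0 D1 c x t) \<subseteq> {100}" using t by (intro exI[of _ 2]) simp
  qed
  show "one_sided_error D0 D1 {100} (7/8) Lang13"
    unfolding one_sided_error_def paca_acc_prob_def
  proof (intro conjI allI impI)
    fix x assume a: "input_word x \<and> x \<in> Lang13"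
    have bdd: "bdd_above (range (\<lambda>t. measure_pmf.prob (prun D0 D1 {100} x t) {p. snd p}))"
      by (rule bdd_aboveI2[where M=1]) simp
    have "1 - 7/8 \<le> (1/2::real)" by simp
    also have "\<dots> \<le> measure_pmf.prob (prun D0 D1 {100} x 2) {p. snd p}" using member_prob a by blast
    also have "\<dots> \<le> (SUP t. measure_pmf.prob (prun D0 D1 {100} x t) {p. snd p})"
      by (rule cSUP_upper[OF _ bdd]) simp
    finally show "1 - 7/8 \<le> (SUP t. measure_pmf.prob (prun D0 D1 {100} x t) {p. snd p})" .
  next
    fix x assume a: "input_word x \<and> x \<notin> Lang13"
    then show "(SUP t. measure_pmf.prob (prun D0 D1 {100} x t) {p. snd p}) = 0"
      using nonmember_prob by simp
  qed
qed


theorem mainTheorem13: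
  shows "(\<not> (\<exists>Q \<delta> A. is_DACA Q \<delta> A \<and> daca_time \<delta> A (\<lambda>_. 3) \<and> daca_lang_is \<delta> A Lang13)) \<and>
         (\<exists>Q \<delta>0 \<delta>1 A. is_PACA Q \<delta>0 \<delta>1 A \<and> paca_time \<delta>0 \<delta>1 A (\<lambda>_. 3) \<and>
            one_sided_error \<delta>0 \<delta>1 A (7/8) Lang13)"
  using part1 part2 by blast

end
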